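(* The function $s \mapsto s\,\dfrac{\theta_4'(s)}{\theta_4(s)}$ is strictly decreasing on $(0,\infty)$.
   Context: For $s>0$, $\theta_4(s) = \sum_{k\in\mathbb{Z}} (-1)^k e^{-\pi k^2 s}$. *)

theory Defs
  imports "HOL-Analysis.Analysis"
begin

definition theta4 :: "real \<Rightarrow> real" where
  "theta4 s = (\<Sum>\<^sub>\<infinity>k::int. (-1) powi k * exp (- pi * (real_of_int k)\<^sup>2 * s))"

end

theory Submission
  imports Defs "HOL-Library.Nat_Bijection"
begin

definition qp :: "real \<Rightarrow> nat \<Rightarrow> real" where
  "qp x n = (\<Prod>i<n. 1 - x^(2*i+2))"

definition qb :: "real \<Rightarrow> nat \<Rightarrow> nat \<Rightarrow> real" where
  "qb x m k = (if k \<le> m then qp x m / (qp x k * qp x (m-k)) else 0)"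

lemma qp_Suc: "qp x (Suc n) = qp x n * (1 - x^(2*n+2))"
  by (simp add: qp_def)

lemma qp_0[simp]: "qp x 0 = 1" by (simp add: qp_def)

lemma qp_pos: assumes "0 < x" "x < 1" shows "qp x n > 0"
  unfolding qp_def
proof (intro prod_pos ballI)
  fix i assume "i \<in> {..<n}"
  have "x^(2*i+2) < 1" using power_Suc_less_one[OF assms, of "2*i+1"] by simp
  thus "0 < 1 - x^(2*i+2)" by simp
qed

lemma qb_0[simp]: assumes "0 < x" "x < 1" shows "qb x m 0 = 1"
  using qp_pos[OF assms, of m] by (simp add: qb_def)

lemma alg_aux:
  fixes P aa bb uu vv ww tt :: real
  assumes "aa \<noteq> 0" "bb \<noteq> 0" "uu \<noteq> 0" "vv \<noteq> 0" "ww = uu + tt * vv"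
  shows "P*ww/((aa*uu)*(bb * vv)) = P/(aa*(bb * vv)) + tt*(P/((aa*uu)*bb))"
  using assms by (simp add: field_simps)

lemma qb_Suc:
  assumes "0 < x" "x < 1" "k \<le> m"
  shows "qb x (Suc m) (Suc k) = qb x m k + x^(2*Suc k) * qb x m (Suc k)"
proof (cases "k = m")
  case True
  then show ?thesis using qp_pos[OF assms(1,2), of m] qp_pos[OF assms(1,2), of "Suc m"]
    by (simp add: qb_def)
next
  case False
  hence km: "k < m" using assms by simp
  define d where "d = m - Suc k"
  have d: "m = k + Suc d" using km unfolding d_def by simp
  have pos: "\<And>n. qp x n > 0" using qp_pos[OF assms(1,2)] by blast
  have e1: "Suc m - Suc k = Suc d" "m - k = Suc d" "m - Suc k = d" using d by auto
  have h: "x^(2*m+2) = x^(2*Suc k) * x^(2*d+2)"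
    unfolding power_add[symmetric] using d by (simp add: algebra_simps)
  have ab: "\<And>a b c::real. c = a * b \<Longrightarrow> 1 - c = (1 - a) + a * (1 - b)" by algebra
  have pw: "1 - x^(2*m+2) = (1 - x^(2*Suc k)) + x^(2*Suc k) * (1 - x^(2*d+2))"
    by (rule ab[OF h])
  have A: "qp x (Suc k) = qp x k * (1 - x^(2*k+2))" "qp x (Suc d) = qp x d * (1 - x^(2*d+2))"
     "qp x (Suc m) = qp x m * (1 - x^(2*m+2))" by (simp_all add: qp_Suc)
  have n1: "1 - x^(2*k+2) \<noteq> 0" "1 - x^(2*d+2) \<noteq> 0"
    using pos[of "Suc k"] pos[of "Suc d"] A by auto
  have "qb x (Suc m) (Suc k) = qp x m * (1 - x^(2*m+2)) / ((qp x k * (1 - x^(2*k+2))) * (qp x d * (1 - x^(2*d+2))))"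
    unfolding qb_def using km e1 A by simp
  also have "\<dots> = qp x m / (qp x k * (qp x d * (1 - x^(2*d+2)))) + x^(2*Suc k) * (qp x m / ((qp x k * (1 - x^(2*k+2))) * qp x d))"
    by (rule alg_aux) (use pos[of k] pos[of d] n1 pw in auto)
  also have "\<dots> = qb x m k + x^(2*Suc k) * qb x m (Suc k)"
    unfolding qb_def using km e1 A by simp
  finally show ?thesis .
qed

lemma qb_gt[simp]: "m < k \<Longrightarrow> qb x m k = 0" by (simp add: qb_def)

lemma tri_Suc: "Suc k * (Suc k - 1) = k * (k - 1) + 2 * k"
  by (cases k) (simp_all add: algebra_simps)

lemma qbt:
  assumes x: "0 < x" "x < 1"
  shows "(\<Prod>j<m. z + y * x^(2*j)) = (\<Sum>k\<le>m. x^(k*(k-1)) * qb x m k * y^k * z^(m-k))"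
proof (induction m arbitrary: y)
  case 0
  then show ?case using x by simp
next
  case (Suc m)
  define t where "t k = x^(k*(k-1)) * qb x m k * (y*x^2)^k * z^(m-k)" for k
  define S where "S = (\<Sum>k\<le>m. t k)"
  have "(\<Prod>j<Suc m. z + y * x^(2*j)) = (z + y) * (\<Prod>j<m. z + (y*x^2) * x^(2*j))"
  proof -
    have e: "\<And>j. x^(2*Suc j) = x^2 * x^(2*j)" by (simp only: power_mult power_Suc)
    show ?thesis by (subst prod.lessThan_Suc_shift) (simp add: e mult_ac power2_eq_square)
  qed
  also have "\<dots> = (z + y) * S" unfolding Suc.IH S_def t_def ..
  finally have L: "(\<Prod>j<Suc m. z + y * x^(2*j)) = z * S + y * S" by (simp add: algebra_simps)
  have zS: "z * S = z^(Suc m) + (\<Sum>k\<le>m. x^(Suc k * k + 2 * Suc k) * qb x m (Suc k) * y^(Suc k) * z^(m-k))"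
  proof -
    have "z * S = (\<Sum>k\<le>Suc m. z * t k)" using x by (simp add: S_def sum_distrib_left t_def)
    also have "\<dots> = z * t 0 + (\<Sum>k\<le>m. z * t (Suc k))" by (rule sum.atMost_Suc_shift)
    also have "z * t 0 = z^(Suc m)" using x by (simp add: t_def)
    also have "(\<Sum>k\<le>m. z * t (Suc k)) = (\<Sum>k\<le>m. x^(Suc k * k + 2 * Suc k) * qb x m (Suc k) * y^(Suc k) * z^(m-k))"
    proof (rule sum.cong[OF refl])
      fix k assume "k \<in> {..m}"
      hence "k < m \<or> k = m" by auto
      thus "z * t (Suc k) = x^(Suc k * k + 2 * Suc k) * qb x m (Suc k) * y^(Suc k) * z^(m-k)"
      proof
        assume "k < m"
        hence zz: "z^(m-k) = z * z^(m - Suc k)" by (metis Suc_diff_Suc power_Suc)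
        have p1: "(y*x^2)^(Suc k) = y^(Suc k) * x^(2*Suc k)" by (simp only: power_mult_distrib power_mult)
        have p2: "x^(Suc k * k + 2*Suc k) = x^(Suc k * k) * x^(2 * Suc k)" by (rule power_add)
        show ?thesis unfolding t_def p1 diff_Suc_1 p2 zz by (simp only: mult_ac)
      qed (simp add: t_def)
    qed
    finally show ?thesis .
  qed
  have yS: "y * S = (\<Sum>k\<le>m. x^(Suc k * k) * qb x m k * y^(Suc k) * z^(m-k))"
    unfolding S_def sum_distrib_left
  proof (rule sum.cong[OF refl])
    fix k
    have e: "Suc k * k = k * (k - 1) + 2 * k" using tri_Suc[of k] by simp
    have p1: "(y*x^2)^k = y^k * x^(2*k)" by (simp only: power_mult_distrib power_mult)
    show "y * t k = x^(Suc k * k) * qb x m k * y^(Suc k) * z^(m-k)"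
      unfolding t_def p1 e power_add power_Suc by (simp only: mult_ac)
  qed
  have R: "(\<Sum>k\<le>Suc m. x^(k*(k-1)) * qb x (Suc m) k * y^k * z^(Suc m-k))
     = z^(Suc m) + (\<Sum>k\<le>m. x^(Suc k * k) * qb x (Suc m) (Suc k) * y^(Suc k) * z^(m-k))"
    using x by (subst sum.atMost_Suc_shift) simp
  have R2: "(\<Sum>k\<le>m. x^(Suc k * k) * qb x (Suc m) (Suc k) * y^(Suc k) * z^(m-k))
     = (\<Sum>k\<le>m. x^(Suc k * k) * qb x m k * y^(Suc k) * z^(m-k)) +
       (\<Sum>k\<le>m. x^(Suc k * k + 2 * Suc k) * qb x m (Suc k) * y^(Suc k) * z^(m-k))"
    unfolding sum.distrib[symmetric]
  proof (rule sum.cong[OF refl])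
    fix k assume "k \<in> {..m}"
    hence "k \<le> m" by simp
    thus "x^(Suc k * k) * qb x (Suc m) (Suc k) * y^(Suc k) * z^(m-k) =
      x^(Suc k * k) * qb x m k * y^(Suc k) * z^(m-k) + x^(Suc k * k + 2 * Suc k) * qb x m (Suc k) * y^(Suc k) * z^(m-k)"
      unfolding qb_Suc[OF x \<open>k \<le> m\<close>] power_add by (simp only: distrib_left distrib_right mult_ac)
  qed
  show ?case using L zS yS R R2 by simp
qed

lemma prod_split_add: fixes b :: nat shows "(\<Prod>j<a+b. f j) = (\<Prod>j<a. f j) * (\<Prod>i<b. f (a+i) :: real)"
  by (induction b) (simp_all add: mult_ac)

lemma prod_neg_pow: "(\<Prod>j<N. - ((x::real)^(2*j))) = (-1)^N * x^(N*(N-1))"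
proof (induction N)
  case (Suc N)
  have "N*(N-1) + 2*N = Suc N * (Suc N - 1)" using tri_Suc[of N] by simp
  hence "x^(Suc N * (Suc N - 1)) = x^(N*(N-1)) * x^(2*N)" by (metis power_add)
  then show ?case using Suc by simp
qed simp

lemma expo_id:
  fixes k N :: nat
  assumes "k \<le> 2*N" "N \<ge> 1"
  shows "k*(k-1) + (2*N-1)*(2*N-k) = ((k-N)^2 + (N-k)^2) + (N*(N-1) + (2*N-1)*N)"
proof -
  consider "k = 0" | "1 \<le> k" "k \<le> N" | "N < k" using assms by linarith
  then show ?thesis
  proof cases
    case 1
    then show ?thesis using assms by (cases N) (simp_all add: algebra_simps power2_eq_square)
  next
    case 2
    define j where "j = k - 1"
    have j: "k = Suc j" using 2 unfolding j_def by simp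
    define d where "d = N - k"
    have d: "N = k + d" using 2 unfolding d_def by simp
    show ?thesis unfolding d j by (simp add: algebra_simps power2_eq_square)
  next
    case 3
    define d where "d = k - Suc N"
    have d: "k = N + Suc d" using 3 unfolding d_def by simp
    define e where "e = N - Suc d"
    have e: "N = Suc d + e" using assms(1) d unfolding e_def by simp
    show ?thesis unfolding d e by (simp add: algebra_simps power2_eq_square)
  qed
qed

definition Pp :: "real \<Rightarrow> nat \<Rightarrow> real" where
  "Pp x N = (\<Prod>i<N. 1 - x^(2*i+1))"

lemma fin_id_pos:
  assumes x: "0 < x" "x < 1" and N: "N \<ge> 1"
  shows "(Pp x N)^2 = (\<Sum>k\<le>2*N. (-1)^(k+N) * x^((k-N)^2 + (N-k)^2) * qb x (2*N) k)"
proof -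
  define C where "C = x^(N*(N-1) + (2*N-1)*N)"
  have Cpos: "C > 0" using x by (simp add: C_def)
  have L: "(\<Prod>j<2*N. x^(2*N-1) + (-1) * x^(2*j)) = (-1)^N * C * (Pp x N)^2"
  proof -
    have "(\<Prod>j<2*N. x^(2*N-1) + (-1) * x^(2*j)) = (\<Prod>j<N. x^(2*N-1) - x^(2*j)) * (\<Prod>i<N. x^(2*N-1) - x^(2*(N+i)))"
      using prod_split_add[where a=N and b=N and f="\<lambda>j. x^(2*N-1) + (-1) * x^(2*j)"] by (simp add: mult_2)
    also have "(\<Prod>j<N. x^(2*N-1) - x^(2*j)) = (\<Prod>j<N. - (x^(2*j)) * (1 - x^(2*(N - Suc j)+1)))"
    proof (rule prod.cong[OF refl])
      fix j assume "j \<in> {..<N}"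
      hence "2*N-1 = 2*j + (2*(N - Suc j)+1)" by auto
      hence "x^(2*N-1) = x^(2*j) * x^(2*(N - Suc j)+1)" by (metis power_add)
      thus "x^(2*N-1) - x^(2*j) = - (x^(2*j)) * (1 - x^(2*(N - Suc j)+1))" by (simp add: algebra_simps)
    qed
    also have "\<dots> = (-1)^N * x^(N*(N-1)) * Pp x N"
      unfolding prod.distrib prod_neg_pow Pp_def
      using prod.nat_diff_reindex[of "\<lambda>i. 1 - x^(2*i+1)" N] by simp
    also have "(\<Prod>i<N. x^(2*N-1) - x^(2*(N+i))) = (\<Prod>i<N. x^(2*N-1) * (1 - x^(2*i+1)))"
    proof (rule prod.cong[OF refl])
      fix i assume "i \<in> {..<N}"
      have "2*(N+i) = (2*N-1) + (2*i+1)" using N by auto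
      hence "x^(2*(N+i)) = x^(2*N-1) * x^(2*i+1)" by (metis power_add)
      thus "x^(2*N-1) - x^(2*(N+i)) = x^(2*N-1) * (1 - x^(2*i+1))" by (simp add: algebra_simps)
    qed
    also have "\<dots> = x^((2*N-1)*N) * Pp x N"
      unfolding prod.distrib Pp_def by (simp add: power_mult)
    finally show ?thesis unfolding C_def power_add by (simp add: power2_eq_square mult_ac)
  qed
  have R: "(\<Sum>k\<le>2*N. x^(k*(k-1)) * qb x (2*N) k * (-1)^k * (x^(2*N-1))^(2*N-k))
     = (-1)^N * C * (\<Sum>k\<le>2*N. (-1)^(k+N) * x^((k-N)^2 + (N-k)^2) * qb x (2*N) k)"
    unfolding sum_distrib_left
  proof (rule sum.cong[OF refl])
    fix k assume "k \<in> {..2*N}"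
    hence k: "k \<le> 2*N" by simp
    have e: "x^(k*(k-1)) * (x^(2*N-1))^(2*N-k) = x^((k-N)^2 + (N-k)^2) * C"
      unfolding C_def power_mult[symmetric] power_add[symmetric] using expo_id[OF k N] by simp
    have s: "(-1::real)^k = (-1)^N * (-1)^(k+N)"
    proof -
      have "N + (k + N) = k + 2*N" by simp
      hence "(-1::real)^N * (-1)^(k+N) = (-1)^(k + 2*N)" by (metis power_add)
      thus ?thesis by (simp add: power_add power_mult)
    qed
    show "x^(k*(k-1)) * qb x (2*N) k * (-1)^k * (x^(2*N-1))^(2*N-k) =
        (-1)^N * C * ((-1)^(k+N) * x^((k-N)^2 + (N-k)^2) * qb x (2*N) k)"
      using e s by (simp add: mult_ac)
  qed
  have "(-1)^N * C * (Pp x N)^2 = (-1)^N * C * (\<Sum>k\<le>2*N. (-1)^(k+N) * x^((k-N)^2 + (N-k)^2) * qb x (2*N) k)"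
    using qbt[OF x, where m="2*N" and z="x^(2*N-1)" and y="-1"] L R by simp
  moreover have "(-1::real)^N * C \<noteq> 0" using Cpos by simp
  ultimately show ?thesis by simp
qed

lemma int_encode_eq': "int_encode j = (if 0 \<le> j then 2 * nat j else Suc (2 * nat (- j - 1)))"
  by (simp add: int_encode_def sum_encode_def)

lemma int_decode_eq': "int_decode n = (if even n then int (n div 2) else - int (n div 2) - 1)"
  by (simp add: int_decode_def sum_decode_def)

lemma int_encode_le: "int_encode j \<le> 2 * nat \<bar>j\<bar>"
  unfolding int_encode_eq' by auto

lemma int_decode_bound: "i < 2*N+1 \<Longrightarrow> \<bar>int_decode i\<bar> \<le> int N"
  unfolding int_decode_eq' by (auto elim!: oddE)

lemma int_decode_bound2: "\<bar>int_decode i\<bar> \<le> int N \<Longrightarrow> i < 2*N+1"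
proof -
  assume a: "\<bar>int_decode i\<bar> \<le> int N"
  have "i = int_encode (int_decode i)" by simp
  also have "\<dots> \<le> 2 * nat \<bar>int_decode i\<bar>" by (rule int_encode_le)
  also have "\<dots> \<le> 2 * N" using a by simp
  finally show ?thesis by simp
qed

definition ta :: "real \<Rightarrow> nat \<Rightarrow> real" where
  "ta x i = (-1)^(nat \<bar>int_decode i\<bar>) * x^((nat \<bar>int_decode i\<bar>)^2)"

definition tc :: "real \<Rightarrow> nat \<Rightarrow> nat \<Rightarrow> real" where
  "tc x N i = qb x (2*N) (nat (int N + int_decode i))"

lemma neg1_pow_even_add: "(-1::real)^(2*a + m) = (-1)^m"
  by (simp add: power_add power_mult)

lemma term_eq:
  assumes "\<bar>int_decode i\<bar> \<le> int N"
  shows "(-1)^(nat (int N + int_decode i)+N) * x^((nat (int N + int_decode i)-N)^2 + (N-nat (int N + int_decode i))^2) * qb x (2*N) (nat (int N + int_decode i))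
     = ta x i * tc x N i"
proof (cases "int_decode i \<ge> 0")
  case True
  define m where "m = nat (int_decode i)"
  have k: "nat (int N + int_decode i) = N + m" using True unfolding m_def by simp
  have a: "nat \<bar>int_decode i\<bar> = m" using True unfolding m_def by simp
  have s: "N + m + N = 2*N + m" by simp
  show ?thesis unfolding ta_def tc_def k a s neg1_pow_even_add by simp
next
  case False
  define m where "m = nat (- int_decode i)"
  have mN: "m \<le> N" using assms False unfolding m_def by simp
  have k: "nat (int N + int_decode i) = N - m" using False assms unfolding m_def by simp
  have a: "nat \<bar>int_decode i\<bar> = m" using False unfolding m_def by simp
  have s: "N - m + N = 2*(N-m) + m" using mN by simp
  have e: "N - m - N = 0" "N - (N - m) = m" using mN by auto
  show ?thesis unfolding ta_def tc_def k a s neg1_pow_even_add e by simp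
qed

lemma fin_id:
  assumes x: "0 < x" "x < 1"
  shows "(Pp x N)^2 = (\<Sum>i<2*N+1. ta x i * tc x N i)"
proof (cases "N = 0")
  case True
  then show ?thesis using x by (simp add: Pp_def ta_def tc_def int_decode_eq')
next
  case False
  hence N: "N \<ge> 1" by simp
  have "(Pp x N)^2 = (\<Sum>k\<le>2*N. (-1)^(k+N) * x^((k-N)^2 + (N-k)^2) * qb x (2*N) k)"
    by (rule fin_id_pos[OF x N])
  also have "\<dots> = (\<Sum>i<2*N+1. ta x i * tc x N i)"
  proof (rule sum.reindex_bij_witness[where i="\<lambda>i. nat (int N + int_decode i)" and j="\<lambda>k. int_encode (int k - int N)"], goal_cases)
    case (3 a)
    hence "\<bar>int_decode a\<bar> \<le> int N" using int_decode_bound by simp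
    hence "int (nat (int N + int_decode a)) = int N + int_decode a" by simp
    then show ?case by simp
  next
    case (4 a)
    hence "\<bar>int_decode a\<bar> \<le> int N" using int_decode_bound by simp
    then show ?case by auto
  next
    case (1 b)
    then show ?case by simp
  next
    case (2 b)
    hence "\<bar>int_decode (int_encode (int b - int N))\<bar> \<le> int N" by simp
    from int_decode_bound2[OF this] show ?case by simp
  next
    case (5 b)
    hence "\<bar>int_decode (int_encode (int b - int N))\<bar> \<le> int N" by simp
    from term_eq[OF this, of x] 5 show ?case by simp
  qed
  finally show ?thesis .
qed

lemma ln_one_minus_bound:
  fixes t :: real
  assumes "0 \<le> t" "t < 1"
  shows "\<bar>ln (1 - t)\<bar> \<le> t / (1 - t)"
proof -
  have "ln (1 - t) \<le> 0" using assms by simp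
  moreover have "ln (inverse (1 - t)) \<le> inverse (1 - t) - 1"
    using assms by (intro ln_le_minus_one) simp
  moreover have "ln (inverse (1 - t)) = - ln (1 - t)" using assms by (simp add: ln_inverse)
  moreover have "inverse (1 - t) - 1 = t / (1 - t)" using assms by (simp add: field_simps)
  ultimately show ?thesis by simp
qed

lemma ln_one_minus_pow_bound:
  fixes x :: real
  assumes "0 < x" "x < 1" "m \<ge> i" "m > 0"
  shows "\<bar>ln (1 - x^m)\<bar> \<le> x^i / (1 - x)"
proof -
  have xm: "x^m \<le> x" using assms by (simp add: power_le_one_iff power_decreasing[of 1 m x, simplified])
  have xmi: "x^m \<le> x^i" using assms by (intro power_decreasing) auto
  have xm1: "x^m < 1" using assms by (simp add: power_less_one_iff)
  have "\<bar>ln (1 - x^m)\<bar> \<le> x^m / (1 - x^m)" using xm1 assms by (intro ln_one_minus_bound) auto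
  also have "\<dots> \<le> x^i / (1 - x)"
    using xm xmi xm1 assms by (intro frac_le) auto
  finally show ?thesis .
qed

definition lq :: "real \<Rightarrow> nat \<Rightarrow> real" where "lq x i = ln (1 - x^(2*i+2))"
definition lp :: "real \<Rightarrow> nat \<Rightarrow> real" where "lp x i = ln (1 - x^(2*i+1))"

lemma summable_geo_div: fixes x :: real assumes "0 < x" "x < 1" shows "summable (\<lambda>i. x^i / (1 - x))"
proof -
  have "summable (\<lambda>i. x^i)" using summable_geometric[of x] assms by simp
  from summable_divide[OF this] show ?thesis .
qed

lemma pow_lt1: "0 < x \<Longrightarrow> (x::real) < 1 \<Longrightarrow> m > 0 \<Longrightarrow> x^m < 1"
  by (simp add: power_less_one_iff)

lemma exp_ln_1m: "0 < x \<Longrightarrow> (x::real) < 1 \<Longrightarrow> m > 0 \<Longrightarrow> exp (ln (1 - x^m)) = 1 - x^m"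
  using pow_lt1[of x m] by simp

lemma ln_1m_nonpos: "0 < x \<Longrightarrow> (x::real) < 1 \<Longrightarrow> m > 0 \<Longrightarrow> ln (1 - x^m) \<le> 0"
  using pow_lt1[of x m] by simp

lemma summable_lq: assumes "0 < x" "x < 1" shows "summable (lq x)"
proof (rule summable_comparison_test[OF _ summable_geo_div[OF assms]])
  show "\<exists>N. \<forall>n\<ge>N. norm (lq x n) \<le> x^n / (1 - x)"
  proof (intro exI[of _ 0] allI impI)
    fix n :: nat
    show "norm (lq x n) \<le> x^n / (1 - x)" unfolding lq_def real_norm_def
      by (rule ln_one_minus_pow_bound) (use assms in auto)
  qed
qed

lemma summable_lp: assumes "0 < x" "x < 1" shows "summable (lp x)"
proof (rule summable_comparison_test[OF _ summable_geo_div[OF assms]])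
  show "\<exists>N. \<forall>n\<ge>N. norm (lp x n) \<le> x^n / (1 - x)"
  proof (intro exI[of _ 0] allI impI)
    fix n :: nat
    show "norm (lp x n) \<le> x^n / (1 - x)" unfolding lp_def real_norm_def
      by (rule ln_one_minus_pow_bound) (use assms in auto)
  qed
qed

lemma lq_nonpos: assumes "0 < x" "x < 1" shows "lq x i \<le> 0"
  unfolding lq_def by (rule ln_1m_nonpos) (use assms in auto)

lemma lp_nonpos: assumes "0 < x" "x < 1" shows "lp x i \<le> 0"
  unfolding lp_def by (rule ln_1m_nonpos) (use assms in auto)

lemma qp_exp: assumes "0 < x" "x < 1" shows "qp x n = exp (\<Sum>i<n. lq x i)"
  unfolding qp_def lq_def exp_sum[OF finite_lessThan]
  by (rule prod.cong[OF refl], rule exp_ln_1m[symmetric]) (use assms in auto)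

lemma Pp_exp: assumes "0 < x" "x < 1" shows "Pp x n = exp (\<Sum>i<n. lp x i)"
  unfolding Pp_def lp_def exp_sum[OF finite_lessThan]
  by (rule prod.cong[OF refl], rule exp_ln_1m[symmetric]) (use assms in auto)

definition Qinf :: "real \<Rightarrow> real" where "Qinf x = exp (suminf (lq x))"

lemma qp_lim: assumes "0 < x" "x < 1" shows "qp x \<longlonglongrightarrow> Qinf x"
  unfolding qp_exp[OF assms, abs_def] Qinf_def
  by (intro tendsto_exp summable_LIMSEQ summable_lq assms)

lemma Pp2_lim: assumes "0 < x" "x < 1" shows "(\<lambda>N. (Pp x N)^2) \<longlonglongrightarrow> exp (suminf (lp x))^2"
  unfolding Pp_exp[OF assms, abs_def]
  by (intro tendsto_power tendsto_exp summable_LIMSEQ summable_lp assms)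

lemma qp_ge: assumes "0 < x" "x < 1" shows "qp x n \<ge> Qinf x"
proof -
  have "(\<Sum>i<n. - lq x i) \<le> suminf (\<lambda>i. - lq x i)"
    using lq_nonpos[OF assms] summable_lq[OF assms]
    by (intro sum_le_suminf summable_minus) auto
  hence "suminf (lq x) \<le> (\<Sum>i<n. lq x i)"
    using summable_lq[OF assms] by (simp add: suminf_minus sum_negf)
  thus ?thesis unfolding qp_exp[OF assms] Qinf_def by simp
qed

lemma qp_le1: assumes "0 < x" "x < 1" shows "qp x n \<le> 1"
proof -
  have "(\<Sum>i<n. lq x i) \<le> 0" using lq_nonpos[OF assms] by (intro sum_nonpos) auto
  thus ?thesis unfolding qp_exp[OF assms] by simp
qed

lemma Qinf_pos: "Qinf x > 0" by (simp add: Qinf_def)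

lemma filterlim_nat_shift: "filterlim (\<lambda>N::nat. nat (int N + j)) sequentially sequentially"
  unfolding filterlim_at_top eventually_sequentially
proof
  fix Z :: nat
  show "\<exists>N. \<forall>n\<ge>N. Z \<le> nat (int n + j)"
    by (rule exI[of _ "Z + nat \<bar>j\<bar>"]) auto
qed

lemma tc_lim:
  assumes x: "0 < x" "x < 1"
  shows "(\<lambda>N. tc x N i) \<longlonglongrightarrow> 1 / Qinf x"
proof -
  define j where "j = int_decode i"
  define Q where "Q = Qinf x"
  have Q: "Q > 0" unfolding Q_def by (rule Qinf_pos)
  have l1: "(\<lambda>N. qp x (2*N)) \<longlonglongrightarrow> Q"
    unfolding Q_def by (rule filterlim_compose[OF qp_lim[OF x] filterlim_subseq]) (simp add: strict_mono_def)
  have l2: "(\<lambda>N. qp x (nat (int N + j))) \<longlonglongrightarrow> Q"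
    unfolding Q_def by (rule filterlim_compose[OF qp_lim[OF x] filterlim_nat_shift])
  have l3: "(\<lambda>N. qp x (nat (int N + - j))) \<longlonglongrightarrow> Q"
    unfolding Q_def by (rule filterlim_compose[OF qp_lim[OF x] filterlim_nat_shift])
  have "(\<lambda>N. qp x (2*N) / (qp x (nat (int N + j)) * qp x (nat (int N + - j)))) \<longlonglongrightarrow> Q / (Q * Q)"
    using Q by (intro tendsto_intros l1 l2 l3) simp
  moreover have "Q / (Q * Q) = 1 / Q" using Q by simp
  moreover have "eventually (\<lambda>N. qp x (2*N) / (qp x (nat (int N + j)) * qp x (nat (int N + - j))) = tc x N i) sequentially"
    unfolding eventually_sequentially
  proof (intro exI[of _ "nat \<bar>j\<bar>"] allI impI)
    fix N assume N: "nat \<bar>j\<bar> \<le> N"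
    have a: "nat (int N + j) \<le> 2*N" using N by auto
    have b: "2*N - nat (int N + j) = nat (int N + - j)" using N by auto
    show "qp x (2*N) / (qp x (nat (int N + j)) * qp x (nat (int N + - j))) = tc x N i"
      unfolding tc_def qb_def j_def[symmetric] using a b by simp
  qed
  ultimately show ?thesis unfolding Q_def by (auto intro: Lim_transform_eventually)
qed

lemma qb_bound:
  assumes x: "0 < x" "x < 1"
  shows "0 \<le> qb x m k" "qb x m k \<le> 1 / (Qinf x * Qinf x)"
proof -
  have pos: "\<And>n. qp x n > 0" using qp_pos[OF x] by blast
  show "0 \<le> qb x m k" unfolding qb_def using pos by (simp add: less_imp_le)
  have Q: "Qinf x > 0" by (rule Qinf_pos)
  have "qp x m / (qp x k * qp x (m-k)) \<le> 1 / (Qinf x * Qinf x)"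
  proof (rule frac_le)
    show "Qinf x * Qinf x \<le> qp x k * qp x (m-k)"
      by (rule mult_mono[OF qp_ge[OF x] qp_ge[OF x] less_imp_le[OF pos] less_imp_le[OF Q]])
  qed (use qp_le1[OF x] pos[of m] pos[of k] pos[of "m-k"] Q in simp_all)
  thus "qb x m k \<le> 1 / (Qinf x * Qinf x)" unfolding qb_def using Q by auto
qed

lemma ta_bound:
  assumes x: "0 < x" "x < 1"
  shows "\<bar>ta x i\<bar> \<le> sqrt x ^ i"
proof -
  define m where "m = nat \<bar>int_decode i\<bar>"
  have "i = int_encode (int_decode i)" by simp
  also have "\<dots> \<le> 2 * m" unfolding m_def by (rule int_encode_le)
  also have "\<dots> \<le> 2 * m^2" by (simp add: power2_eq_square)
  finally have im: "i \<le> 2 * m^2" .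
  have "\<bar>ta x i\<bar> = x^(m^2)" unfolding ta_def m_def[symmetric] using x by (simp add: abs_mult power_abs)
  also have "\<dots> = sqrt x ^ (2 * m^2)" using x by (simp add: power_mult)
  also have "\<dots> \<le> sqrt x ^ i" using x im by (intro power_decreasing) auto
  finally show ?thesis .
qed

lemma summable_sqrt_pow: assumes "0 < x" "x < 1" shows "summable (\<lambda>i. sqrt x ^ i)"
  using summable_geometric[of "sqrt x"] assms by simp

lemma summable_ta: assumes x: "0 < x" "x < 1" shows "summable (\<lambda>i. norm (ta x i))"
  by (rule summable_comparison_test[OF _ summable_sqrt_pow[OF x]]) (use ta_bound[OF x] in auto)

lemma ta_sum:
  assumes x: "0 < x" "x < 1"
  shows "suminf (ta x) = Qinf x * exp (suminf (lp x))^2"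
proof -
  define Q where "Q = Qinf x"
  have Q: "Q > 0" unfolding Q_def by (rule Qinf_pos)
  define a where "a k N = (if k < 2*N+1 then ta x k * tc x N k else 0)" for k N
  have lim: "\<And>k. (\<lambda>N. a k N) \<longlonglongrightarrow> ta x k * (1 / Q)"
  proof -
    fix k
    have "(\<lambda>N. ta x k * tc x N k) \<longlonglongrightarrow> ta x k * (1 / Q)"
      unfolding Q_def by (intro tendsto_mult tendsto_const tc_lim x)
    moreover have "eventually (\<lambda>N. ta x k * tc x N k = a k N) sequentially"
      unfolding eventually_sequentially a_def by (intro exI[of _ k]) auto
    ultimately show "(\<lambda>N. a k N) \<longlonglongrightarrow> ta x k * (1 / Q)" by (rule Lim_transform_eventually)
  qed
  have bound: "\<And>k N. norm (a k N) \<le> sqrt x ^ k * (1 / (Q * Q))"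
  proof -
    fix k N
    have "\<bar>ta x k * tc x N k\<bar> \<le> sqrt x ^ k * (1 / (Q * Q))"
      unfolding abs_mult tc_def Q_def
      using qb_bound[OF x] ta_bound[OF x] x by (intro mult_mono) auto
    thus "norm (a k N) \<le> sqrt x ^ k * (1 / (Q * Q))" unfolding a_def using Q by auto
  qed
  have summ: "summable (\<lambda>k. sqrt x ^ k * (1 / (Q * Q)))"
    by (intro summable_mult2 summable_sqrt_pow x)
  have T: "(\<lambda>N. suminf (\<lambda>k. a k N)) \<longlonglongrightarrow> suminf (\<lambda>k. ta x k * (1 / Q))"
  proof -
    have ev: "eventually (\<lambda>(k,n). norm (a k n) \<le> sqrt x ^ k * (1 / (Q * Q))) (at_top \<times>\<^sub>F sequentially)"
    proof (rule always_eventually, rule allI)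
      fix p :: "nat \<times> nat"
      show "(\<lambda>(k,n). norm (a k n) \<le> sqrt x ^ k * (1 / (Q * Q))) p"
        by (cases p) (simp only: prod.case bound)
    qed
    have nb: "sequentially \<noteq> bot" by simp
    show ?thesis using tannerys_theorem[OF lim ev summ nb, THEN conjunct2, THEN conjunct2] .
  qed
  have eq: "suminf (\<lambda>k. a k N) = (Pp x N)^2" for N
  proof -
    have "suminf (\<lambda>k. a k N) = (\<Sum>k\<in>{..<2*N+1}. a k N)"
      by (rule suminf_finite) (simp_all add: a_def)
    also have "\<dots> = (\<Sum>k<2*N+1. ta x k * tc x N k)"
      by (rule sum.cong) (simp_all add: a_def)
    also have "\<dots> = (Pp x N)^2" by (rule fin_id[OF x, symmetric])
    finally show ?thesis .
  qed
  have T2: "(\<lambda>N. (Pp x N)^2) \<longlonglongrightarrow> suminf (\<lambda>k. ta x k * (1 / Q))" using T unfolding eq .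
  have "suminf (\<lambda>k. ta x k * (1 / Q)) = exp (suminf (lp x))^2"
    using LIMSEQ_unique[OF T2 Pp2_lim[OF x]] .
  moreover have "suminf (\<lambda>k. ta x k * (1 / Q)) = suminf (ta x) * (1 / Q)"
    by (rule suminf_mult2[symmetric], rule summable_norm_cancel, rule summable_ta[OF x])
  ultimately show ?thesis using Q unfolding Q_def by (simp add: field_simps)
qed

lemma powi_neg1: "(-1::real) powi j = (-1)^(nat \<bar>j\<bar>)"
  by (cases "j \<ge> 0") (simp_all add: power_int_def)

lemma theta_term:
  assumes "s > 0"
  shows "(-1) powi (int_decode i) * exp (- pi * (real_of_int (int_decode i))\<^sup>2 * s) = ta (exp (- pi * s)) i"
proof -
  define j where "j = int_decode i"
  define m where "m = nat \<bar>j\<bar>"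
  have r: "real (m^2) = (real_of_int j)^2" unfolding m_def by simp
  have "exp (- pi * s) ^ (m^2) = exp (real (m^2) * (- pi * s))" by (rule exp_of_nat_mult[symmetric])
  also have "\<dots> = exp (- pi * (real_of_int j)\<^sup>2 * s)" unfolding r by (simp add: mult_ac)
  finally have e: "exp (- pi * (real_of_int j)\<^sup>2 * s) = exp (- pi * s) ^ (m^2)" ..
  have p: "(-1::real) powi j = (-1)^m" unfolding m_def by (rule powi_neg1)
  show ?thesis unfolding ta_def j_def[symmetric] m_def[symmetric] by (simp only: p e)
qed

lemma theta4_eq:
  assumes s: "s > 0"
  shows "theta4 s = suminf (ta (exp (- pi * s)))"
proof -
  define x where "x = exp (- pi * s)"
  have x: "0 < x" "x < 1" unfolding x_def using s by auto
  define f where "f j = (-1) powi j * exp (- pi * (real_of_int j)\<^sup>2 * s)" for j :: int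
  have fe: "f \<circ> int_decode = ta x" unfolding f_def x_def by (rule ext) (simp only: comp_def theta_term[OF s])
  have "(ta x has_sum suminf (ta x)) UNIV"
    by (rule norm_summable_imp_has_sum[OF summable_ta[OF x]], rule summable_sums,
        rule summable_norm_cancel, rule summable_ta[OF x])
  hence "((f \<circ> int_decode) has_sum suminf (ta x)) UNIV" unfolding fe .
  hence "(f has_sum suminf (ta x)) (int_decode ` UNIV)"
    by (subst has_sum_reindex) (simp_all add: inj_int_decode)
  hence "(f has_sum suminf (ta x)) UNIV" using surj_int_decode by simp
  hence "infsum f UNIV = suminf (ta x)" by (rule infsumI)
  thus ?thesis unfolding theta4_def f_def x_def .
qed

definition Lg :: "real \<Rightarrow> real" where
  "Lg x = suminf (\<lambda>i. lq x i + 2 * lp x i)"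

lemma ta_sum_exp:
  assumes x: "0 < x" "x < 1"
  shows "suminf (ta x) = exp (Lg x)"
proof -
  have s1: "summable (\<lambda>i. 2 * lp x i)" by (rule summable_mult[OF summable_lp[OF x]])
  have "Lg x = suminf (lq x) + suminf (\<lambda>i. 2 * lp x i)"
    unfolding Lg_def by (rule suminf_add[OF summable_lq[OF x] s1, symmetric])
  also have "suminf (\<lambda>i. 2 * lp x i) = 2 * suminf (lp x)" by (rule suminf_mult[OF summable_lp[OF x]])
  finally have L: "Lg x = suminf (lq x) + 2 * suminf (lp x)" .
  have e2: "exp (2 * suminf (lp x)) = exp (suminf (lp x))^2"
    using exp_of_nat_mult[of 2 "suminf (lp x)"] by simp
  have "exp (Lg x) = Qinf x * exp (suminf (lp x))^2"
    unfolding Qinf_def L exp_add e2 ..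
  thus ?thesis using ta_sum[OF x] by simp
qed

lemma theta4_exp:
  assumes s: "s > 0"
  shows "theta4 s = exp (Lg (exp (- pi * s)))"
proof -
  have "0 < exp (- pi * s)" "exp (- pi * s) < 1" using s by auto
  from ta_sum_exp[OF this] theta4_eq[OF s] show ?thesis by simp
qed

lemma exp_gt_1plus:
  fixes z :: real
  assumes "z \<noteq> 0" "1 + z/2 \<ge> 0"
  shows "exp z > 1 + z"
proof -
  have a: "exp (z/2) \<ge> 1 + z/2" by (rule exp_ge_add_one_self)
  have "exp z = exp (z/2) * exp (z/2)" by (simp add: exp_add[symmetric])
  also have "\<dots> \<ge> (1 + z/2) * (1 + z/2)" using a assms(2) by (intro mult_mono) auto
  finally have "exp z \<ge> 1 + z + z^2/4" by (simp add: algebra_simps power2_eq_square)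
  moreover have "z^2 > 0" using assms(1) by simp
  ultimately show ?thesis by linarith
qed

lemma exp_neg_gt: "y > 0 \<Longrightarrow> exp (- y) > 1 - (y::real)"
proof (cases "y \<le> 1")
  case True
  assume "y > 0"
  thus ?thesis using exp_gt_1plus[of "- y"] True by simp
next
  case False
  thus ?thesis by (smt (verit) exp_gt_zero)
qed

lemma key_neg: "y > 0 \<Longrightarrow> exp y * (1 - y) < (1::real)"
proof -
  assume y: "y > 0"
  have "1 - y < exp (- y)" by (rule exp_neg_gt[OF y])
  hence "exp y * (1 - y) < exp y * exp (- y)" by simp
  thus ?thesis by (simp add: exp_minus)
qed

definition Fm :: "real \<Rightarrow> real" where "Fm y = y / (exp y - 1)"

lemma Fm_deriv:
  assumes "y > 0"
  shows "(Fm has_field_derivative ((exp y - 1) - y * exp y) / (exp y - 1)^2) (at y)"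
proof -
  have ne: "exp y - 1 \<noteq> 0" using assms by simp
  have d1: "((\<lambda>y. y) has_field_derivative 1) (at y)" by (rule DERIV_ident)
  have d2: "((\<lambda>y. exp y - 1) has_field_derivative exp y) (at y)"
    using DERIV_diff[OF DERIV_exp DERIV_const[of 1]] by simp
  have "Fm = (\<lambda>y. y / (exp y - 1))" unfolding Fm_def ..
  moreover have "((\<lambda>y. y / (exp y - 1)) has_field_derivative (1 * (exp y - 1) - exp y * y) / (exp y - 1) ^ Suc (Suc 0)) (at y)"
    by (rule DERIV_quotient[OF d1 d2 ne])
  ultimately show ?thesis by (simp add: power2_eq_square mult.commute)
qed

lemma Fm_strict_dec:
  assumes "0 < a" "a < b"
  shows "Fm a > Fm b"
proof (rule DERIV_neg_imp_decreasing[OF assms(2)])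
  fix y assume y: "a \<le> y" "y \<le> b"
  hence yp: "y > 0" using assms by simp
  have "(exp y - 1) - y * exp y = exp y * (1 - y) - 1" by (simp add: algebra_simps)
  hence num: "(exp y - 1) - y * exp y < 0" using key_neg[OF yp] by simp
  have "(exp y - 1)^2 > 0" using yp by simp
  hence "((exp y - 1) - y * exp y) / (exp y - 1)^2 < 0" using num by (simp add: divide_neg_pos)
  thus "\<exists>d. (Fm has_field_derivative d) (at y) \<and> d < 0" using Fm_deriv[OF yp] by blast
qed

lemma Fm_dec: "0 < a \<Longrightarrow> a \<le> b \<Longrightarrow> Fm b \<le> Fm a"
  using Fm_strict_dec[of a b] by (cases "a = b") auto

definition hh :: "nat \<Rightarrow> real \<Rightarrow> real" where "hh m s = ln (1 - exp (- pi * s) ^ m)"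
definition dd :: "nat \<Rightarrow> real \<Rightarrow> real" where "dd m s = pi * m * exp (- pi * s) ^ m / (1 - exp (- pi * s) ^ m)"

lemma exp_pow_lt1: "s > 0 \<Longrightarrow> m > 0 \<Longrightarrow> exp (- pi * s) ^ m < 1"
  by (rule pow_lt1) auto

lemma hh_deriv:
  assumes s: "s > 0" and m: "m > 0"
  shows "(hh m has_field_derivative dd m s) (at s)"
proof -
  define E where "E = exp (- pi * s)"
  have lt: "E ^ m < 1" unfolding E_def by (rule exp_pow_lt1[OF s m])
  have d0: "((\<lambda>s. - pi * s) has_field_derivative - pi * 1) (at s)" by (rule DERIV_cmult[OF DERIV_ident])
  have d1: "((\<lambda>s. exp (- pi * s)) has_field_derivative exp (- pi * s) * (- pi * 1)) (at s)"
    by (rule DERIV_fun_exp[OF d0])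
  have d2: "((\<lambda>s. exp (- pi * s) ^ m) has_field_derivative of_nat m * ((exp (- pi * s) * (- pi * 1)) * exp (- pi * s) ^ (m - Suc 0))) (at s)"
    by (rule DERIV_power[OF d1])
  have d3: "((\<lambda>s. 1 - exp (- pi * s) ^ m) has_field_derivative 0 - of_nat m * ((exp (- pi * s) * (- pi * 1)) * exp (- pi * s) ^ (m - Suc 0))) (at s)"
    by (rule DERIV_diff[OF DERIV_const d2])
  have d4: "DERIV ln (1 - exp (- pi * s) ^ m) :> 1 / (1 - exp (- pi * s) ^ m)"
    by (rule DERIV_ln_divide) (use lt in \<open>simp add: E_def\<close>)
  have d5: "(hh m has_field_derivative (1 / (1 - exp (- pi * s) ^ m)) * (0 - of_nat m * ((exp (- pi * s) * (- pi * 1)) * exp (- pi * s) ^ (m - Suc 0)))) (at s)"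
    unfolding hh_def[abs_def] by (rule DERIV_chain2[OF d4 d3])
  have pw: "exp (- pi * s) * exp (- pi * s) ^ (m - Suc 0) = exp (- pi * s) ^ m"
    using m by (metis Suc_pred power_Suc)
  have "(1 / (1 - exp (- pi * s) ^ m)) * (0 - of_nat m * ((exp (- pi * s) * (- pi * 1)) * exp (- pi * s) ^ (m - Suc 0)))
       = pi * m * (exp (- pi * s) * exp (- pi * s) ^ (m - Suc 0)) / (1 - exp (- pi * s) ^ m)"
    by (simp add: field_simps)
  also have "\<dots> = dd m s" unfolding pw dd_def ..
  finally show ?thesis using d5 by simp
qed

lemma summable_n_pow:
  fixes r :: real
  assumes r: "0 < r" "r < 1"
  shows "summable (\<lambda>i. (real i + 1) * r^i)"
proof -
  define \<rho> where "\<rho> = sqrt r"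
  have rho: "0 < \<rho>" "\<rho> < 1" unfolding \<rho>_def using r by auto
  have "(\<lambda>n. of_nat n * \<rho>^n) \<longlonglongrightarrow> (0::real)" by (rule powser_times_n_limit_0) (use rho in simp)
  hence "Bseq (\<lambda>n. of_nat n * \<rho>^n)" by (rule convergent_imp_Bseq[OF convergentI])
  then obtain K where K: "K > 0" "\<And>n. norm (of_nat n * \<rho>^n) \<le> K" by (auto simp: Bseq_def)
  have rr: "r^n = \<rho>^n * \<rho>^n" for n
    unfolding \<rho>_def using r by (simp add: power_mult_distrib[symmetric])
  show ?thesis
  proof (rule summable_comparison_test[OF _ summable_mult[OF summable_geometric[of \<rho>], of "K + 1"]])
    show "norm \<rho> < 1" using rho by simp
    show "\<exists>N. \<forall>n\<ge>N. norm ((real n + 1) * r^n) \<le> (K + 1) * \<rho>^n"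
    proof (intro exI[of _ 0] allI impI)
      fix n :: nat
      have a: "real n * \<rho>^n \<le> K" using K(2)[of n] rho by simp
      have b: "\<rho>^n \<le> 1" using rho by (simp add: power_le_one)
      have c: "0 \<le> \<rho>^n" using rho by simp
      have "(real n + 1) * r^n = (real n * \<rho>^n) * \<rho>^n + \<rho>^n * \<rho>^n" unfolding rr by (simp add: algebra_simps)
      also have "\<dots> \<le> K * \<rho>^n + 1 * \<rho>^n"
        by (intro add_mono mult_right_mono a b c)
      finally show "norm ((real n + 1) * r^n) \<le> (K + 1) * \<rho>^n"
        using r by (simp add: algebra_simps)
    qed
  qed
qed

lemma dd_nonneg: "s > 0 \<Longrightarrow> m > 0 \<Longrightarrow> dd m s \<ge> 0"
  unfolding dd_def using exp_pow_lt1[of s m] by (intro divide_nonneg_pos mult_nonneg_nonneg) auto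

lemma dd_bound:
  assumes s0: "s0 > 0" and t: "t \<ge> s0" and m: "m > 0"
  shows "dd m t \<le> pi * m * exp (- pi * s0) ^ m / (1 - exp (- pi * s0))"
proof -
  define r where "r = exp (- pi * s0)"
  define E where "E = exp (- pi * t)"
  have r: "0 < r" "r < 1" unfolding r_def using s0 by auto
  have E: "0 < E" "E \<le> r" unfolding E_def r_def using t by auto
  have Em: "E^m \<le> r^m" using E by (intro power_mono) auto
  have rm: "r^m \<le> r" using r m by (intro power_decreasing[of 1 m r, simplified]) auto
  show ?thesis unfolding dd_def E_def[symmetric] r_def[symmetric]
  proof (rule frac_le)
    show "pi * real m * E ^ m \<le> pi * real m * r ^ m" using Em by (intro mult_left_mono) auto
    show "0 < 1 - r" using r by simp
    show "1 - r \<le> 1 - E^m" using Em rm by simp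
  qed (use r in simp)
qed

definition vv :: "nat \<Rightarrow> real \<Rightarrow> real" where "vv i s = dd (2*i+2) s + 2 * dd (2*i+1) s"
definition uu :: "nat \<Rightarrow> real \<Rightarrow> real" where "uu i s = hh (2*i+2) s + 2 * hh (2*i+1) s"

lemma vv_bound:
  assumes s0: "s0 > 0" and t: "t \<ge> s0"
  shows "norm (vv i t) \<le> 3 * pi / (1 - exp (- pi * s0)) * ((real i + 1) * 2 * exp (- pi * s0) ^ i)"
proof -
  define r where "r = exp (- pi * s0)"
  have r: "0 < r" "r < 1" unfolding r_def using s0 by auto
  have tp: "t > 0" using s0 t by simp
  have g: "real m * r^m \<le> (real i + 1) * 2 * r^i" if "m \<le> 2*i+2" "i \<le> m" for m
  proof -
    have "real m \<le> real (2*i+2)" using that(1) by (simp only: of_nat_le_iff)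
    hence "real m \<le> (real i + 1) * 2" by simp
    moreover have "r^m \<le> r^i" using r that by (intro power_decreasing) auto
    ultimately show ?thesis using r by (intro mult_mono) auto
  qed
  have b1: "dd (2*i+2) t \<le> pi / (1 - r) * ((real i + 1) * 2 * r^i)"
  proof -
    have "dd (2*i+2) t \<le> pi * real (2*i+2) * r^(2*i+2) / (1 - r)" unfolding r_def by (rule dd_bound[OF s0 t]) simp
    also have "\<dots> = pi / (1 - r) * (real (2*i+2) * r^(2*i+2))" by simp
    also have "\<dots> \<le> pi / (1 - r) * ((real i + 1) * 2 * r^i)"
      using r by (intro mult_left_mono g) auto
    finally show ?thesis .
  qed
  have b2: "dd (2*i+1) t \<le> pi / (1 - r) * ((real i + 1) * 2 * r^i)"
  proof -
    have "dd (2*i+1) t \<le> pi * real (2*i+1) * r^(2*i+1) / (1 - r)" unfolding r_def by (rule dd_bound[OF s0 t]) simp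
    also have "\<dots> = pi / (1 - r) * (real (2*i+1) * r^(2*i+1))" by simp
    also have "\<dots> \<le> pi / (1 - r) * ((real i + 1) * 2 * r^i)"
      using r by (intro mult_left_mono g) auto
    finally show ?thesis .
  qed
  have nn: "vv i t \<ge> 0" unfolding vv_def using dd_nonneg[OF tp] by (simp add: add_nonneg_nonneg)
  have "vv i t \<le> 3 * pi / (1 - r) * ((real i + 1) * 2 * r^i)"
  proof -
    have "3 * pi / (1 - r) * ((real i + 1) * 2 * r^i) = 3 * (pi / (1 - r) * ((real i + 1) * 2 * r^i))" by simp
    moreover have "\<And>a b B::real. a \<le> B \<Longrightarrow> b \<le> B \<Longrightarrow> a + 2 * b \<le> 3 * B" by linarith
    ultimately show ?thesis unfolding vv_def using b1 b2 by metis
  qed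
  thus ?thesis using nn unfolding r_def by simp
qed

definition Gs :: "real \<Rightarrow> real" where "Gs s = (\<Sum>i. uu i s)"

lemma uu_lq: "uu i s = lq (exp (- pi * s)) i + 2 * lp (exp (- pi * s)) i"
  unfolding uu_def hh_def lq_def lp_def ..

lemma Gs_Lg: "Gs s = Lg (exp (- pi * s))"
  unfolding Gs_def Lg_def uu_lq ..

lemma summable_uu: assumes "s > 0" shows "summable (\<lambda>i. uu i s)"
proof -
  have x: "0 < exp (- pi * s)" "exp (- pi * s) < 1" using assms by auto
  show ?thesis unfolding uu_lq
    by (rule summable_add[OF summable_lq[OF x] summable_mult[OF summable_lp[OF x]]])
qed

lemma uu_deriv: assumes "s > 0" shows "(uu i has_field_derivative vv i s) (at s)"
proof -
  have a: "(hh (2*i+2) has_field_derivative dd (2*i+2) s) (at s)" by (rule hh_deriv[OF assms]) simp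
  have b: "(hh (2*i+1) has_field_derivative dd (2*i+1) s) (at s)" by (rule hh_deriv[OF assms]) simp
  have "((\<lambda>s. hh (2*i+2) s + 2 * hh (2*i+1) s) has_field_derivative dd (2*i+2) s + 2 * dd (2*i+1) s) (at s)"
    by (rule DERIV_add[OF a DERIV_cmult[OF b]])
  thus ?thesis unfolding uu_def[abs_def] vv_def .
qed

lemma summable_M:
  fixes r :: real
  assumes r: "0 < r" "r < 1"
  shows "summable (\<lambda>i. 3 * pi / (1 - r) * ((real i + 1) * 2 * r ^ i))"
proof -
  have a: "summable (\<lambda>i. (real i + 1) * r^i * 2)" by (rule summable_mult2[OF summable_n_pow[OF r]])
  have b: "summable (\<lambda>i. 3 * pi / (1 - r) * ((real i + 1) * r^i * 2))" by (rule summable_mult[OF a])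
  have eq: "(\<lambda>i. 3 * pi / (1 - r) * ((real i + 1) * r^i * 2)) = (\<lambda>i. 3 * pi / (1 - r) * ((real i + 1) * 2 * r ^ i))"
    by (rule ext) (simp only: mult.assoc mult.commute[of "r^_" 2])
  show ?thesis using b unfolding eq .
qed

lemma summable_vv: assumes s: "s > 0" shows "summable (\<lambda>i. vv i s)"
proof -
  define r where "r = exp (- pi * (s/2))"
  have r: "0 < r" "r < 1" unfolding r_def using s by auto
  show ?thesis
  proof (rule summable_comparison_test[OF _ summable_M[OF r]])
    show "\<exists>N. \<forall>n\<ge>N. norm (vv n s) \<le> 3 * pi / (1 - r) * ((real n + 1) * 2 * r ^ n)"
      unfolding r_def using s by (intro exI[of _ 0] allI impI vv_bound) auto
  qed
qed

lemma Gs_deriv: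
  assumes s: "s > 0"
  shows "(Gs has_field_derivative (\<Sum>i. vv i s)) (at s)"
proof -
  define S where "S = {s/2 .. 2 * s}"
  define r where "r = exp (- pi * (s/2))"
  have r: "0 < r" "r < 1" unfolding r_def using s by auto
  have unif: "uniformly_convergent_on S (\<lambda>n x. \<Sum>i<n. vv i x)"
  proof (rule Weierstrass_m_test'[OF _ summable_M[OF r]])
    fix n x assume "x \<in> S"
    hence "x \<ge> s/2" unfolding S_def by simp
    show "norm (vv n x) \<le> 3 * pi / (1 - r) * ((real n + 1) * 2 * r ^ n)"
      unfolding r_def by (rule vv_bound) (use s \<open>x \<ge> s/2\<close> in auto)
  qed
  have der: "\<And>n x. x \<in> S \<Longrightarrow> (uu n has_field_derivative vv n x) (at x within S)"
  proof -
    fix n x assume "x \<in> S"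
    hence "x > 0" unfolding S_def using s by simp
    thus "(uu n has_field_derivative vv n x) (at x within S)"
      by (rule has_field_derivative_at_within[OF uu_deriv])
  qed
  have "s \<in> S" "s \<in> interior S" unfolding S_def using s by auto
  note ss = this
  have conv: "convex S" unfolding S_def by (rule convex_real_interval)
  have eqG: "Gs = (\<lambda>x. \<Sum>n. uu n x)" unfolding Gs_def[abs_def] ..
  show ?thesis unfolding eqG by (rule has_field_derivative_series'(2)[OF conv der unif ss(1) summable_uu[OF s] ss(2)])
qed

lemma theta4_Gs: "s > 0 \<Longrightarrow> theta4 s = exp (Gs s)"
  unfolding Gs_Lg by (rule theta4_exp)

lemma theta4_deriv:
  assumes s: "s > 0"
  shows "deriv theta4 s = exp (Gs s) * (\<Sum>i. vv i s)"
proof -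
  have "((\<lambda>y. exp (Gs y)) has_field_derivative exp (Gs s) * (\<Sum>i. vv i s)) (at s)"
    by (rule DERIV_fun_exp[OF Gs_deriv[OF s]])
  hence "(theta4 has_field_derivative exp (Gs s) * (\<Sum>i. vv i s)) (at s)"
  proof (rule has_field_derivative_transform_within_open[where S="{0<..}"])
    show "open ({0<..} :: real set)" by simp
    show "s \<in> {0<..}" using s by simp
    fix y :: real assume "y \<in> {0<..}"
    hence "y > 0" by simp
    thus "exp (Gs y) = theta4 y" by (rule theta4_Gs[symmetric])
  qed
  thus ?thesis by (rule DERIV_imp_deriv)
qed

lemma ratio_eq:
  assumes s: "s > 0"
  shows "s * deriv theta4 s / theta4 s = (\<Sum>i. s * vv i s)"
proof -
  have e: "(\<Sum>i. s * vv i s) = s * (\<Sum>i. vv i s)" by (rule suminf_mult[OF summable_vv[OF s]])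
  have p: "exp (Gs s) \<noteq> 0" by simp
  show ?thesis unfolding theta4_deriv[OF s] theta4_Gs[OF s] e using p by (simp add: field_simps)
qed

lemma s_dd: assumes s: "s > 0" and m: "m > 0" shows "s * dd m s = Fm (pi * m * s)"
proof -
  define y where "y = pi * m * s"
  have y: "y > 0" unfolding y_def using s m by simp
  have E: "exp (- pi * s) ^ m = exp (- y)" unfolding y_def
    using exp_of_nat_mult[of m "- pi * s"] by (simp add: mult_ac)
  have ey: "exp y > 1" using y by simp
  have "s * dd m s = y * exp (- y) / (1 - exp (- y))"
    unfolding dd_def E y_def by (simp add: mult_ac)
  also have "\<dots> = y / (exp y - 1)"
    using ey by (simp add: exp_minus field_simps)
  finally show ?thesis unfolding Fm_def y_def .
qed

definition W :: "nat \<Rightarrow> real \<Rightarrow> real" where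
  "W i s = Fm (pi * real (2*i+2) * s) + 2 * Fm (pi * real (2*i+1) * s)"

lemma s_vv: "s > 0 \<Longrightarrow> s * vv i s = W i s"
  unfolding vv_def W_def by (simp add: distrib_left s_dd)

lemma W_mono:
  assumes "0 < s" "s \<le> t"
  shows "W i t \<le> W i s"
proof -
  have a: "Fm (pi * real (2*i+2) * t) \<le> Fm (pi * real (2*i+2) * s)"
    by (rule Fm_dec) (use assms in auto)
  have b: "Fm (pi * real (2*i+1) * t) \<le> Fm (pi * real (2*i+1) * s)"
    by (rule Fm_dec) (use assms in auto)
  show ?thesis unfolding W_def using a b by linarith
qed

lemma W_strict:
  assumes "0 < s" "s < t"
  shows "W i t < W i s"
proof -
  have "Fm (pi * real (2*i+2) * t) < Fm (pi * real (2*i+2) * s)"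
    using assms by (intro Fm_strict_dec) auto
  moreover have "Fm (pi * real (2*i+1) * t) \<le> Fm (pi * real (2*i+1) * s)"
    using assms by (intro Fm_dec) auto
  ultimately show ?thesis unfolding W_def by simp
qed

lemma suminf_strict:
  fixes f g :: "nat \<Rightarrow> real"
  assumes "summable f" "summable g" "\<And>n. f n \<le> g n" "f 0 < g 0"
  shows "suminf f < suminf g"
proof -
  have "(\<Sum>n. f (Suc n)) \<le> (\<Sum>n. g (Suc n))"
    using assms by (intro suminf_le) (auto simp: summable_Suc_iff)
  thus ?thesis using suminf_split_head[OF assms(1)] suminf_split_head[OF assms(2)] assms(4) by simp
qed

theorem mainTheorem12:
  shows "strict_antimono_on {0<..} (\<lambda>s. s * deriv theta4 s / theta4 s)"
proof (rule monotone_onI)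
  fix s t :: real assume st: "s \<in> {0<..}" "t \<in> {0<..}" "s < t"
  have s: "s > 0" and t: "t > 0" using st by auto
  have sW: "summable (\<lambda>i. W i s)"
    using summable_mult[OF summable_vv[OF s], of s] s_vv[OF s] by simp
  have tW: "summable (\<lambda>i. W i t)"
    using summable_mult[OF summable_vv[OF t], of t] s_vv[OF t] by simp
  have "(\<Sum>i. W i t) < (\<Sum>i. W i s)"
  proof (rule suminf_strict[OF tW sW])
    show "\<And>n. W n t \<le> W n s" using W_mono[OF s] st(3) by simp
    show "W 0 t < W 0 s" by (rule W_strict[OF s st(3)])
  qed
  thus "t * deriv theta4 t / theta4 t < s * deriv theta4 s / theta4 s"
    unfolding ratio_eq[OF s] ratio_eq[OF t] s_vv[OF s] s_vv[OF t] .
qed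

end
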